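(* Let $A\subset\mathbb R^\tau$ be a compact max-min convex set and let $\xi\colon J(A)\to A$ be the max-min barycenter map $\xi(\mu)=(\mu(p_\alpha))_{\alpha<\tau}$. Then $(A,\xi)$ is a $\mathbb J$-algebra, i.e. $\xi\circ\eta_A=1_A$ and $\xi\circ\psi_A=\xi\circ J(\xi)$.
   Context: A max-min measure on a compact Hausdorff space $X$ is a functional $\mu\colon C(X)\to\mathbb R$ (not assumed continuous) with $\mu(c_X)=c$ for constants, $\mu(\varphi\vee\psi)=\mu(\varphi)\vee\mu(\psi)$, $\mu(c\wedge\varphi)=c\wedge\mu(\varphi)$ for $c\in\mathbb R$; $J(X)$ is the set of max-min measures with the topology of pointwise convergence on $C(X)$; for continuous $f$, $J(f)(\mu)(\varphi)=\mu(\varphi\circ f)$. $\eta_X(x)=\delta_x$ with $\delta_x(\varphi)=\varphi(x)$; $\psi_X\colon J(J(X))\to J(X)$ is $\psi_X(M)(\varphi)=M(\bar\varphi)$, $\bar\varphi(\mu)=\mu(\varphi)$. $p_\alpha\colon A\to\mathbb R$ is the $\alpha$-th coordinate projection. A subset $A\subset\mathbb R^\tau$ is max-min convex if $x\vee(\lambda\wedge y)\in A$ for all $x,y\in A$, $\lambda\in\mathbb R$ (coordinatewise operations); for such compact $A$, $\xi$ takes values in $A$. *)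

theory Defs
  imports "HOL-Analysis.Analysis"
begin

text \<open>C(X): continuous real functions on the topological space X, represented
  canonically as extensional functions (value undefined outside topspace X).\<close>
definition Cfun :: "'a topology \<Rightarrow> ('a \<Rightarrow> real) set" where
  "Cfun X = {\<phi>. continuous_map X euclideanreal \<phi> \<and> \<phi> \<in> extensional (topspace X)}"

definition maxmin_measure :: "'a topology \<Rightarrow> (('a \<Rightarrow> real) \<Rightarrow> real) \<Rightarrow> bool" where
  "maxmin_measure X \<mu> \<longleftrightarrow>
     \<mu> \<in> extensional (Cfun X) \<and>
     (\<forall>c::real. \<mu> (restrict (\<lambda>_. c) (topspace X)) = c) \<and>
     (\<forall>\<phi>\<in>Cfun X. \<forall>\<psi>\<in>Cfun X.
        \<mu> (restrict (\<lambda>x. max (\<phi> x) (\<psi> x)) (topspace X)) = max (\<mu> \<phi>) (\<mu> \<psi>)) \<and>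
     (\<forall>c::real. \<forall>\<phi>\<in>Cfun X.
        \<mu> (restrict (\<lambda>x. min c (\<phi> x)) (topspace X)) = min c (\<mu> \<phi>))"

definition J :: "'a topology \<Rightarrow> (('a \<Rightarrow> real) \<Rightarrow> real) topology" where
  "J X = subtopology (product_topology (\<lambda>_. euclideanreal) (Cfun X)) {\<mu>. maxmin_measure X \<mu>}"

definition Jmap :: "'a topology \<Rightarrow> 'b topology \<Rightarrow> ('a \<Rightarrow> 'b)
    \<Rightarrow> (('a \<Rightarrow> real) \<Rightarrow> real) \<Rightarrow> (('b \<Rightarrow> real) \<Rightarrow> real)" where
  "Jmap X Y f \<mu> = restrict (\<lambda>\<phi>. \<mu> (restrict (\<phi> \<circ> f) (topspace X))) (Cfun Y)"

definition eta :: "'a topology \<Rightarrow> 'a \<Rightarrow> (('a \<Rightarrow> real) \<Rightarrow> real)" where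
  "eta X x = restrict (\<lambda>\<phi>. \<phi> x) (Cfun X)"

definition psi :: "'a topology \<Rightarrow> (((('a \<Rightarrow> real) \<Rightarrow> real) \<Rightarrow> real) \<Rightarrow> real)
    \<Rightarrow> (('a \<Rightarrow> real) \<Rightarrow> real)" where
  "psi X M = restrict (\<lambda>\<phi>. M (restrict (\<lambda>\<mu>. \<mu> \<phi>) (topspace (J X)))) (Cfun X)"

definition maxmin_convex :: "('i \<Rightarrow> real) set \<Rightarrow> bool" where
  "maxmin_convex A \<longleftrightarrow>
     (\<forall>x\<in>A. \<forall>y\<in>A. \<forall>l::real. (\<lambda>\<alpha>. max (x \<alpha>) (min l (y \<alpha>))) \<in> A)"

definition proj :: "('i \<Rightarrow> real) set \<Rightarrow> 'i \<Rightarrow> ('i \<Rightarrow> real) \<Rightarrow> real" where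
  "proj A \<alpha> = restrict (\<lambda>x. x \<alpha>) A"

definition xi :: "('i \<Rightarrow> real) set \<Rightarrow> ((('i \<Rightarrow> real) \<Rightarrow> real) \<Rightarrow> real) \<Rightarrow> ('i \<Rightarrow> real)" where
  "xi A \<mu> = (\<lambda>\<alpha>. \<mu> (proj A \<alpha>))"

end

theory Submission
  imports Defs
begin


lemma Cfun_top: "continuous_on A f \<Longrightarrow> restrict f A \<in> Cfun (subtopology euclidean A)"
  unfolding Cfun_def
  by (simp add: continuous_on_eq[of A f])  

lemma mm_const:
  assumes "maxmin_measure (subtopology euclidean A) \<mu>"
  shows "\<mu> (restrict (\<lambda>_. c) A) = c"
  using assms unfolding maxmin_measure_def by auto

lemma mm_max:
  assumes "maxmin_measure (subtopology euclidean A) \<mu>" "continuous_on A f" "continuous_on A g"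
  shows "\<mu> (restrict (\<lambda>x. max (f x) (g x)) A) = max (\<mu> (restrict f A)) (\<mu> (restrict g A))"
proof -
  have "\<mu> (restrict (\<lambda>x. max (restrict f A x) (restrict g A x)) A) = max (\<mu> (restrict f A)) (\<mu> (restrict g A))"
    using assms(1) Cfun_top[OF assms(2)] Cfun_top[OF assms(3)] unfolding maxmin_measure_def topspace_euclidean_subtopology by blast
  moreover have "restrict (\<lambda>x. max (restrict f A x) (restrict g A x)) A = restrict (\<lambda>x. max (f x) (g x)) A"
    by (auto simp: restrict_def)
  ultimately show ?thesis by simp
qed

lemma mm_min:
  assumes "maxmin_measure (subtopology euclidean A) \<mu>" "continuous_on A f"
  shows "\<mu> (restrict (\<lambda>x. min c (f x)) A) = min c (\<mu> (restrict f A))"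
proof -
  have "\<mu> (restrict (\<lambda>x. min c (restrict f A x)) A) = min c (\<mu> (restrict f A))"
    using assms(1) Cfun_top[OF assms(2)] unfolding maxmin_measure_def topspace_euclidean_subtopology by blast
  moreover have "restrict (\<lambda>x. min c (restrict f A x)) A = restrict (\<lambda>x. min c (f x)) A"
    by (auto simp: restrict_def)
  ultimately show ?thesis by simp
qed

lemma mm_mono:
  assumes "maxmin_measure (subtopology euclidean A) \<mu>" "continuous_on A f" "continuous_on A g"
    "\<And>x. x \<in> A \<Longrightarrow> f x \<le> g x"
  shows "\<mu> (restrict f A) \<le> \<mu> (restrict g A)"
proof -
  have "restrict (\<lambda>x. max (f x) (g x)) A = restrict g A"
    using assms(4) by (auto simp: restrict_def max_def)
  then show ?thesis using mm_max[OF assms(1-3)] by simp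
qed

lemma mm_Max:
  assumes mu: "maxmin_measure (subtopology euclidean A) \<mu>" and "finite F"
    and "\<And>b. b \<in> F \<Longrightarrow> continuous_on A (w b)"
  shows "continuous_on A (\<lambda>x. Max (insert c ((\<lambda>b. w b x) ` F))) \<and>
     \<mu> (restrict (\<lambda>x. Max (insert c ((\<lambda>b. w b x) ` F))) A) = Max (insert c ((\<lambda>b. \<mu> (restrict (w b) A)) ` F))"
  using assms(2,3)
proof (induction F rule: finite_induct)
  case empty
  have "(\<lambda>x. Max (insert c ((\<lambda>b. w b x) ` {}))) = (\<lambda>_. c)" by simp
  then show ?case using mm_const[OF mu, of c] by (simp only:) (simp add: continuous_on_const)
next
  case (insert a F)
  have ins: "\<And>g. insert c (g ` insert a F) = insert (g a) (insert c (g ` F))" by auto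
  have e1: "\<And>x. Max (insert c ((\<lambda>b. w b x) ` insert a F)) = max (w a x) (Max (insert c ((\<lambda>b. w b x) ` F)))"
    unfolding ins using insert by (subst Max_insert) auto
  have e2: "Max (insert c ((\<lambda>b. \<mu> (restrict (w b) A)) ` insert a F)) = max (\<mu> (restrict (w a) A)) (Max (insert c ((\<lambda>b. \<mu> (restrict (w b) A)) ` F)))"
    unfolding ins using insert by (subst Max_insert) auto
  have ca: "continuous_on A (w a)" using insert by auto
  have IH: "continuous_on A (\<lambda>x. Max (insert c ((\<lambda>b. w b x) ` F))) \<and>
     \<mu> (restrict (\<lambda>x. Max (insert c ((\<lambda>b. w b x) ` F))) A) = Max (insert c ((\<lambda>b. \<mu> (restrict (w b) A)) ` F))"
    using insert.IH insert.prems by blast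
  have m: "\<mu> (restrict (\<lambda>x. max (w a x) (Max (insert c ((\<lambda>b. w b x) ` F)))) A)
     = max (\<mu> (restrict (w a) A)) (\<mu> (restrict (\<lambda>x. Max (insert c ((\<lambda>b. w b x) ` F))) A))"
    using IH ca mm_max[OF mu ca, of "\<lambda>x. Max (insert c ((\<lambda>b. w b x) ` F))"] by blast
  have c2: "continuous_on A (\<lambda>x. max (w a x) (Max (insert c ((\<lambda>b. w b x) ` F))))"
    using IH ca by (auto intro: continuous_on_max)
  show ?case unfolding e1 e2
    using c2 m[unfolded IH[THEN conjunct2]] by (rule conjI)
qed

lemma cont_coord: "continuous_on A (\<lambda>x::'i\<Rightarrow>real. x \<beta>)"
  using continuous_on_product_then_coordinatewise[OF continuous_on_id[of A]] by simp

lemma mm_step: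
  assumes mu: "maxmin_measure (subtopology euclidean A) \<mu>" and f: "continuous_on A f"
    and "L < s" "\<mu> (restrict (\<lambda>x. x \<beta>) A) < s"
    and h: "\<And>x. x \<in> A \<Longrightarrow> f x \<le> L \<or> s \<le> x \<beta>"
  shows "\<mu> (restrict f A) < s"
proof -
  let ?b = "\<mu> (restrict (\<lambda>x. x \<beta>) A)"
  have c1: "continuous_on A (\<lambda>x. min s (f x))" using f by (auto intro: continuous_on_min continuous_on_const)
  have c3: "continuous_on A (\<lambda>x. min s (x \<beta>))" by (intro continuous_on_min continuous_on_const cont_coord)
  have c2: "continuous_on A (\<lambda>x. max L (min s (x \<beta>)))" using c3 by (auto intro: continuous_on_max continuous_on_const)
  have le: "\<mu> (restrict (\<lambda>x. min s (f x)) A) \<le> \<mu> (restrict (\<lambda>x. max L (min s (x \<beta>))) A)"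
  proof (rule mm_mono[OF mu c1 c2])
    fix x assume x: "x \<in> A"
    show "min s (f x) \<le> max L (min s (x \<beta>))"
    proof (cases "f x \<le> L")
      case True then show ?thesis by linarith
    next
      case False then have "s \<le> x \<beta>" using h[OF x] by blast
      then show ?thesis by linarith
    qed
  qed
  have "\<mu> (restrict (\<lambda>x. max L (min s (x \<beta>))) A) = max (\<mu> (restrict (\<lambda>_. L) A)) (\<mu> (restrict (\<lambda>x. min s (x \<beta>)) A))"
    using mm_max[OF mu continuous_on_const c3] by simp
  also have "\<dots> = max L (min s ?b)"
    using mm_const[OF mu] mm_min[OF mu cont_coord] by simp
  finally have "min s (\<mu> (restrict f A)) \<le> max L (min s ?b)"
    using le mm_min[OF mu f] by simp
  then show ?thesis using assms(3,4) by linarith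
qed


lemma mm_ramp:
  assumes mu: "maxmin_measure (subtopology euclidean A) \<mu>"
    and b: "b = \<mu> (restrict (\<lambda>x. x \<beta>) A)" and "b \<le> D" and e: "0 < e"
  defines "w \<equiv> \<lambda>x::'i\<Rightarrow>real. max b (min D (b + (2*(D-b)/e) * (x \<beta> - b - e/2)))"
  shows "continuous_on A w" "\<And>x. b + e \<le> x \<beta> \<Longrightarrow> w x = D" "\<mu> (restrict w A) < b + e/2"
proof -
  show cw: "continuous_on A w" unfolding w_def
    by (intro continuous_on_max continuous_on_min continuous_on_const continuous_on_add continuous_on_mult continuous_on_diff cont_coord)
  have K: "0 \<le> 2*(D-b)/e" using assms by auto
  show "w x = D" if "b + e \<le> x \<beta>" for x
  proof -
    have "(2*(D-b)/e) * (x \<beta> - b - e/2) \<ge> (2*(D-b)/e) * (e/2)"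
      using that K by (intro mult_left_mono) auto
    moreover have "(2*(D-b)/e) * (e/2) = D - b" using e by (simp add: field_simps)
    ultimately have ge: "D \<le> b + (2*(D-b)/e) * (x \<beta> - b - e/2)" by linarith
    show ?thesis unfolding w_def by (simp only: min.absorb1[OF ge] max.absorb2[OF assms(3)])
  qed
  show "\<mu> (restrict w A) < b + e/2"
  proof (rule mm_step[OF mu cw, of b])
    show "b < b + e/2" using e by simp
    show "\<mu> (restrict (\<lambda>x. x \<beta>) A) < b + e/2" using e b by simp
    fix x assume "x \<in> A"
    show "w x \<le> b \<or> b + e/2 \<le> x \<beta>"
    proof (cases "b + e/2 \<le> x \<beta>")
      case False
      then have "(2*(D-b)/e) * (x \<beta> - b - e/2) \<le> 0" using K by (intro mult_nonneg_nonpos) auto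
      then show ?thesis unfolding w_def by (simp add: min_def max_def)
    qed simp
  qed
qed



lemma mm_point:
  assumes mu: "maxmin_measure (subtopology euclidean A) \<mu>" and cA: "compact A"
    and f: "continuous_on A f" and G: "finite G" and e: "0 < e"
    and hG: "\<forall>\<beta>\<in>G. \<mu> (restrict (\<lambda>x. x \<beta>) A) + e < \<mu> (restrict f A) - e"
  shows "\<exists>x\<in>A. \<mu> (restrict f A) - e \<le> f x \<and> (\<forall>\<beta>\<in>G. x \<beta> \<le> \<mu> (restrict (\<lambda>x. x \<beta>) A) + e)"
proof (rule ccontr)
  assume no: "\<not> ?thesis"
  define r where "r = \<mu> (restrict f A)"
  define bb where "bb \<beta> = \<mu> (restrict (\<lambda>x. x \<beta>) A)" for \<beta>
  have "compact (f ` A)" using compact_continuous_image[OF f cA] .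
  then have "bounded (f ` A)" by (rule compact_imp_bounded)
  then obtain C where C: "\<And>x. x \<in> A \<Longrightarrow> f x \<le> C"
    unfolding bounded_real by (metis abs_le_D1 image_eqI)
  define D where "D \<beta> = max C (bb \<beta>)" for \<beta>
  define w where "w \<beta> = (\<lambda>x::'a\<Rightarrow>real. max (bb \<beta>) (min (D \<beta>) (bb \<beta> + (2*(D \<beta> - bb \<beta>)/e) * (x \<beta> - bb \<beta> - e/2))))" for \<beta>
  have wc: "continuous_on A (w \<beta>)" and wD: "\<And>x. bb \<beta> + e \<le> x \<beta> \<Longrightarrow> w \<beta> x = D \<beta>"
    and wm: "\<mu> (restrict (w \<beta>) A) < bb \<beta> + e/2" for \<beta>
  proof -
    have Dge: "bb \<beta> \<le> D \<beta>" by (simp add: D_def)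
    note R = mm_ramp[OF mu bb_def[of \<beta>] Dge e]
    show "continuous_on A (w \<beta>)" unfolding w_def by (rule R(1))
    show "\<And>x. bb \<beta> + e \<le> x \<beta> \<Longrightarrow> w \<beta> x = D \<beta>" unfolding w_def by (rule R(2))
    show "\<mu> (restrict (w \<beta>) A) < bb \<beta> + e/2" unfolding w_def by (rule R(3))
  qed
  have bound: "f x \<le> Max (insert (r - e) ((\<lambda>\<beta>. w \<beta> x) ` G))" if x: "x \<in> A" for x
  proof (cases "f x < r - e")
    case True then show ?thesis using G by (meson Max_ge finite_imageI finite_insert insertI1 less_le_not_le order_trans)
  next
    case False
    then obtain \<beta> where b: "\<beta> \<in> G" "\<not> x \<beta> \<le> bb \<beta> + e" using no x unfolding r_def bb_def by force
    then have "w \<beta> x = D \<beta>" using wD by auto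
    then have "f x \<le> w \<beta> x" using C[OF x] D_def by auto
    also have "\<dots> \<le> Max (insert (r - e) ((\<lambda>\<beta>. w \<beta> x) ` G))" using G b by (intro Max_ge) auto
    finally show ?thesis .
  qed
  have MM: "continuous_on A (\<lambda>x. Max (insert (r-e) ((\<lambda>b. w b x) ` G))) \<and>
     \<mu> (restrict (\<lambda>x. Max (insert (r-e) ((\<lambda>b. w b x) ` G))) A) = Max (insert (r-e) ((\<lambda>b. \<mu> (restrict (w b) A)) ` G))"
    by (rule mm_Max[OF mu G]) (use wc in auto)
  have "r \<le> Max (insert (r-e) ((\<lambda>b. \<mu> (restrict (w b) A)) ` G))"
    unfolding r_def using mm_mono[OF mu f MM[THEN conjunct1]] bound MM[THEN conjunct2] unfolding r_def by auto
  moreover have "Max (insert (r-e) ((\<lambda>b. \<mu> (restrict (w b) A)) ` G)) < r"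
  proof -
    have "\<forall>a\<in>insert (r-e) ((\<lambda>b. \<mu> (restrict (w b) A)) ` G). a < r"
    proof
      fix a assume "a \<in> insert (r-e) ((\<lambda>b. \<mu> (restrict (w b) A)) ` G)"
      then show "a < r"
      proof
        assume "a = r - e" then show ?thesis using e by simp
      next
        assume "a \<in> (\<lambda>b. \<mu> (restrict (w b) A)) ` G"
        then obtain \<beta> where "\<beta> \<in> G" "a = \<mu> (restrict (w \<beta>) A)" by auto
        then show ?thesis using wm[of \<beta>] hG e unfolding r_def bb_def by force
      qed
    qed
    then show ?thesis using G by (subst Max_less_iff) auto
  qed
  ultimately show False by simp
qed

lemma mmc_comb:
  assumes cv: "maxmin_convex A" and "finite F" and z: "z \<in> A" and "\<forall>\<alpha>\<in>F. y \<alpha> \<in> A"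
  shows "(\<lambda>\<beta>. Max (insert (z \<beta>) ((\<lambda>\<alpha>. min (c \<alpha>) (y \<alpha> \<beta>)) ` F))) \<in> A"
  using assms(2,4)
proof (induction F rule: finite_induct)
  case empty
  then show ?case using z by simp
next
  case (insert a F)
  have ins: "\<And>g u. insert u (g ` insert a F) = insert (g a) (insert u (g ` F))" by auto
  have e: "(\<lambda>\<beta>. Max (insert (z \<beta>) ((\<lambda>\<alpha>. min (c \<alpha>) (y \<alpha> \<beta>)) ` insert a F)))
     = (\<lambda>\<beta>. max ((\<lambda>\<beta>. Max (insert (z \<beta>) ((\<lambda>\<alpha>. min (c \<alpha>) (y \<alpha> \<beta>)) ` F))) \<beta>) (min (c a) (y a \<beta>)))"
    unfolding ins using insert by (subst Max_insert) (auto simp: max.commute)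
  have o: "(\<lambda>\<beta>. Max (insert (z \<beta>) ((\<lambda>\<alpha>. min (c \<alpha>) (y \<alpha> \<beta>)) ` F))) \<in> A" using insert by auto
  have ya: "y a \<in> A" using insert by auto
  show ?case unfolding e using cv[unfolded maxmin_convex_def, rule_format, OF o ya, of "c a"] .
qed



lemma haus_fun: "Hausdorff_space (euclidean :: ('i \<Rightarrow> real) topology)"
  using Hausdorff_space_product_topology[of "\<lambda>_::'i. (euclidean::real topology)" UNIV]
  by (simp add: euclidean_product_topology)

lemma xi_in:
  fixes A :: "('i \<Rightarrow> real) set"
  assumes cA: "compact A" and cv: "maxmin_convex A"
    and mu: "maxmin_measure (subtopology euclidean A) \<mu>"
  shows "xi A \<mu> \<in> A"
proof (rule ccontr)
  define b where "b = xi A \<mu>"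
  have bb: "b \<beta> = \<mu> (restrict (\<lambda>x. x \<beta>) A)" for \<beta> unfolding b_def xi_def proj_def by simp
  assume nb: "xi A \<mu> \<notin> A"
  have "closedin euclidean A" by (rule compactin_imp_closedin[OF haus_fun compactin_euclidean_iff[THEN iffD2, OF cA]])
  then have "closed A" by (simp only: closed_closedin)
  then have "open (- A)" by (rule open_Compl)
  then have op: "openin (product_topology (\<lambda>_::'i. (euclidean::real topology)) UNIV) (- A)"
    by (simp only: euclidean_product_topology open_openin)
  have bnA: "b \<in> - A" using nb b_def by simp
  obtain X where X: "b \<in> (\<Pi>\<^sub>E i\<in>UNIV. X i)" "\<forall>i. openin euclidean (X i)"
      "finite {i. X i \<noteq> topspace euclidean}" "(\<Pi>\<^sub>E i\<in>UNIV. X i) \<subseteq> - A"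
    using product_topology_open_contains_basis[OF op bnA] by blast
  define F where "F = {i. X i \<noteq> UNIV}"
  have F: "finite F" using X(3) unfolding F_def topspace_euclidean .
  have ex: "\<forall>i\<in>F. \<exists>d>0. ball (b i) d \<subseteq> X i"
  proof
    fix i assume "i \<in> F"
    have "openin euclidean (X i)" using X(2) by blast
    then have "open (X i)" by (simp only: open_openin)
    moreover have "b i \<in> X i" using X(1) by auto
    ultimately show "\<exists>d>0. ball (b i) d \<subseteq> X i" using open_contains_ball by blast
  qed
  obtain dd where dd0: "\<forall>i\<in>F. dd i > 0 \<and> ball (b i) (dd i) \<subseteq> X i" using bchoice[OF ex] by blast
  then have dd: "\<And>i. i \<in> F \<Longrightarrow> dd i > 0 \<and> ball (b i) (dd i) \<subseteq> X i" by blast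
  define e where "e = Min (insert 1 (dd ` F)) / 2"
  have mpos: "0 < Min (insert 1 (dd ` F))" using F dd by (subst Min_gr_iff) auto
  have e: "0 < e" unfolding e_def using mpos by simp
  have edd: "e < dd i" if "i \<in> F" for i
  proof -
    have "Min (insert 1 (dd ` F)) \<le> dd i" using F that by (intro Min_le) auto
    moreover have "0 < Min (insert 1 (dd ` F))" using F dd by (subst Min_gr_iff) auto
    ultimately show ?thesis unfolding e_def by linarith
  qed
  define K where "K = Max (insert 0 ((\<lambda>\<beta>. \<bar>b \<beta>\<bar>) ` F)) + 3*e"
  have Kc: "\<mu> (restrict (\<lambda>_. K) A) = K" using mm_const[OF mu] .
  have "\<forall>\<beta>\<in>F. \<mu> (restrict (\<lambda>x. x \<beta>) A) + e < \<mu> (restrict (\<lambda>_. K) A) - e"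
  proof
    fix \<beta> assume "\<beta> \<in> F"
    then have "\<bar>b \<beta>\<bar> \<le> Max (insert 0 ((\<lambda>\<beta>. \<bar>b \<beta>\<bar>) ` F))" using F by (intro Max_ge) auto
    then show "\<mu> (restrict (\<lambda>x. x \<beta>) A) + e < \<mu> (restrict (\<lambda>_. K) A) - e"
      using Kc bb[of \<beta>] e unfolding K_def by linarith
  qed
  note zz = mm_point[OF mu cA continuous_on_const F e this, unfolded bb[symmetric]]
  obtain z where z: "z \<in> A" "\<And>\<beta>. \<beta> \<in> F \<Longrightarrow> z \<beta> \<le> b \<beta> + e" using zz by blast
  have exy: "\<forall>\<alpha>\<in>F. \<exists>x\<in>A. b \<alpha> - e \<le> x \<alpha> \<and> (\<forall>\<beta>\<in>{\<beta>\<in>F. b \<beta> + e < b \<alpha> - e}. x \<beta> \<le> b \<beta> + e)"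
  proof
    fix \<alpha> assume "\<alpha> \<in> F"
    have G: "finite {\<beta>\<in>F. b \<beta> + e < b \<alpha> - e}" using F by simp
    have "\<forall>\<beta>\<in>{\<beta>\<in>F. b \<beta> + e < b \<alpha> - e}. \<mu> (restrict (\<lambda>x. x \<beta>) A) + e < \<mu> (restrict (\<lambda>x. x \<alpha>) A) - e"
      unfolding bb[symmetric] by blast
    note yy = mm_point[OF mu cA cont_coord G e this, unfolded bb[symmetric]]
    show "\<exists>x\<in>A. b \<alpha> - e \<le> x \<alpha> \<and> (\<forall>\<beta>\<in>{\<beta>\<in>F. b \<beta> + e < b \<alpha> - e}. x \<beta> \<le> b \<beta> + e)"
      using yy by blast
  qed
  from bchoice[OF exy[unfolded Bex_def]] obtain y where y0: "\<forall>\<alpha>\<in>F. y \<alpha> \<in> A \<and> b \<alpha> - e \<le> y \<alpha> \<alpha> \<and>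
      (\<forall>\<beta>\<in>{\<beta>\<in>F. b \<beta> + e < b \<alpha> - e}. y \<alpha> \<beta> \<le> b \<beta> + e)" ..
  have y: "\<And>\<alpha>. \<alpha> \<in> F \<Longrightarrow> y \<alpha> \<in> A \<and> b \<alpha> - e \<le> y \<alpha> \<alpha> \<and>
      (\<forall>\<beta>\<in>{\<beta>\<in>F. b \<beta> + e < b \<alpha> - e}. y \<alpha> \<beta> \<le> b \<beta> + e)" using y0 by (rule bspec)
  have yA: "\<forall>\<alpha>\<in>F. y \<alpha> \<in> A" using y by blast
  define a where "a = (\<lambda>\<beta>. Max (insert (z \<beta>) ((\<lambda>\<alpha>. min (b \<alpha> - e) (y \<alpha> \<beta>)) ` F)))"
  have aA: "a \<in> A" unfolding a_def by (rule mmc_comb[OF cv F z(1) yA])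
  have close: "\<bar>a i - b i\<bar> \<le> e" if i: "i \<in> F" for i
  proof -
    have "min (b i - e) (y i i) \<le> a i" unfolding a_def using F i by (intro Max_ge) auto
    then have lo: "b i - e \<le> a i" using y[OF i] by linarith
    have "a i \<le> b i + e" unfolding a_def
    proof (subst Max_le_iff)
      show "finite (insert (z i) ((\<lambda>\<alpha>. min (b \<alpha> - e) (y \<alpha> i)) ` F))" using F by simp
      show "\<forall>t\<in>insert (z i) ((\<lambda>\<alpha>. min (b \<alpha> - e) (y \<alpha> i)) ` F). t \<le> b i + e"
      proof
        fix t assume "t \<in> insert (z i) ((\<lambda>\<alpha>. min (b \<alpha> - e) (y \<alpha> i)) ` F)"
        then show "t \<le> b i + e"
        proof
          assume "t = z i" then show ?thesis using z(2)[OF i] by simp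
        next
          assume "t \<in> (\<lambda>\<alpha>. min (b \<alpha> - e) (y \<alpha> i)) ` F"
          then obtain \<alpha> where al: "\<alpha> \<in> F" "t = min (b \<alpha> - e) (y \<alpha> i)" by auto
          show ?thesis
          proof (cases "b i + e < b \<alpha> - e")
            case True
            then have "y \<alpha> i \<le> b i + e" using y[OF al(1)] i by auto
            then show ?thesis using al(2) by linarith
          next
            case False then show ?thesis using al(2) by linarith
          qed
        qed
      qed
    qed simp
    with lo show ?thesis by linarith
  qed
  have "a \<in> (\<Pi>\<^sub>E i\<in>UNIV. X i)"
  proof (simp add: PiE_iff, rule allI)
    fix i show "a i \<in> X i"
    proof (cases "i \<in> F")
      case True
      then have "a i \<in> ball (b i) (dd i)" using close[OF True] edd[OF True]
        by (simp add: dist_real_def abs_minus_commute)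
      then show ?thesis using dd[OF True] by auto
    next
      case False then show ?thesis unfolding F_def by auto
    qed
  qed
  then show False using X(4) aA by auto
qed



lemma proj_Cfun: "proj A \<alpha> \<in> Cfun (subtopology euclidean A)"
  unfolding proj_def by (rule Cfun_top[OF cont_coord])

theorem mainTheorem20:
  fixes A :: "('i \<Rightarrow> real) set"
  assumes "compact A" and "maxmin_convex A"
  shows "(\<forall>x\<in>A. xi A (eta (subtopology euclidean A) x) = x)
    \<and> (\<forall>M\<in>topspace (J (J (subtopology euclidean A))).
         xi A (psi (subtopology euclidean A) M)
         = xi A (Jmap (J (subtopology euclidean A)) (subtopology euclidean A) (xi A) M))"
proof (intro conjI ballI)
  fix x assume x: "x \<in> A"
  show "xi A (eta (subtopology euclidean A) x) = x"
  proof
    fix \<alpha>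
    have "xi A (eta (subtopology euclidean A) x) \<alpha> = proj A \<alpha> x"
      unfolding xi_def eta_def using proj_Cfun[of A \<alpha>] by simp
    also have "\<dots> = x \<alpha>" using x unfolding proj_def by simp
    finally show "xi A (eta (subtopology euclidean A) x) \<alpha> = x \<alpha>" .
  qed
next
  fix M
  let ?X = "subtopology euclidean A"
  have eqr: "restrict (\<lambda>\<mu>. \<mu> (proj A \<alpha>)) (topspace (J ?X)) = restrict (proj A \<alpha> \<circ> xi A) (topspace (J ?X))" for \<alpha>
  proof (rule restrict_ext)
    fix \<mu> assume "\<mu> \<in> topspace (J ?X)"
    then have mu: "maxmin_measure ?X \<mu>" unfolding J_def by simp
    have "xi A \<mu> \<in> A" by (rule xi_in[OF assms mu])
    then show "\<mu> (proj A \<alpha>) = (proj A \<alpha> \<circ> xi A) \<mu>" by (simp add: proj_def xi_def)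
  qed
  show "xi A (psi ?X M) = xi A (Jmap (J ?X) ?X (xi A) M)"
  proof
    fix \<alpha>
    have "xi A (psi ?X M) \<alpha> = M (restrict (\<lambda>\<mu>. \<mu> (proj A \<alpha>)) (topspace (J ?X)))"
      unfolding xi_def psi_def using proj_Cfun[of A \<alpha>] by simp
    also have "\<dots> = M (restrict (proj A \<alpha> \<circ> xi A) (topspace (J ?X)))" by (simp only: eqr)
    also have "\<dots> = xi A (Jmap (J ?X) ?X (xi A) M) \<alpha>"
      unfolding xi_def Jmap_def using proj_Cfun[of A \<alpha>] by simp
    finally show "xi A (psi ?X M) \<alpha> = xi A (Jmap (J ?X) ?X (xi A) M) \<alpha>" .
  qed
qed


end
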